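(* Let $q$ be a prime power and $G=\mathrm{PGL}_3(q)$ acting on the points of $\mathrm{PG}_2(q)$. The maximal size of an independent set of the derangement graph $\Gamma_G$ is $q^3(q^2-1)(q-1)$.
   Context: A derangement is an element fixing no point of $\mathrm{PG}_2(q)$. The derangement graph $\Gamma_G$ has vertex set $G$, with $g,h$ adjacent iff $gh^{-1}$ is a derangement. *)

theory Defs
  imports "HOL-Analysis.Analysis"
begin

text \<open>Throughout, the finite field GF(q) is a type 'a of class {field, finite}; q = CARD('a).
  Points of PG_2(q) are the 1-dimensional subspaces of 'a^3, represented as the set of
  nonzero vectors spanning it.  Elements of PGL_3(q) are the classes of invertible
  3x3 matrices modulo nonzero scalar matrices.\<close>

definition PG2_points :: "('a::{field,finite} ^ 3) set set" where
  "PG2_points = {{c *s v | c. c \<noteq> 0} | v. v \<noteq> 0}"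

definition PGL3 :: "('a::{field,finite} ^ 3 ^ 3) set set" where
  "PGL3 = {{mat c ** A | c. c \<noteq> 0} | A. invertible A}"

definition pgl_act :: "('a::{field,finite} ^ 3 ^ 3) set \<Rightarrow> ('a ^ 3) set \<Rightarrow> ('a ^ 3) set" where
  "pgl_act g P = {A *v v | A v. A \<in> g \<and> v \<in> P}"

definition pgl_mult :: "('a::{field,finite} ^ 3 ^ 3) set \<Rightarrow> ('a ^ 3 ^ 3) set \<Rightarrow> ('a ^ 3 ^ 3) set" where
  "pgl_mult g h = {A ** B | A B. A \<in> g \<and> B \<in> h}"

definition pgl_inv :: "('a::{field,finite} ^ 3 ^ 3) set \<Rightarrow> ('a ^ 3 ^ 3) set" where
  "pgl_inv g = {B. \<exists>A\<in>g. B ** A = mat 1}"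

definition derangement :: "('a::{field,finite} ^ 3 ^ 3) set \<Rightarrow> bool" where
  "derangement g \<longleftrightarrow> g \<in> PGL3 \<and> (\<forall>P\<in>PG2_points. pgl_act g P \<noteq> P)"

definition derangement_adj :: "('a::{field,finite} ^ 3 ^ 3) set \<Rightarrow> ('a ^ 3 ^ 3) set \<Rightarrow> bool" where
  "derangement_adj g h \<longleftrightarrow> derangement (pgl_mult g (pgl_inv h))"

definition independent_set :: "('a::{field,finite} ^ 3 ^ 3) set set \<Rightarrow> bool" where
  "independent_set S \<longleftrightarrow> S \<subseteq> PGL3 \<and> (\<forall>g\<in>S. \<forall>h\<in>S. \<not> derangement_adj g h)"

end

theory Submission
  imports Defs
begin


lemma mat_mult_left: "mat c ** (A::'a::comm_ring_1^'n^'m) = (\<chi> i j. c * A$i$j)"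
  by (simp add: matrix_matrix_mult_def mat_def vec_eq_iff if_distrib if_distribR sum.delta' cong: if_cong)

lemma mat_mult_right: "(A::'a::comm_ring_1^'n^'m) ** mat c = (\<chi> i j. c * A$i$j)"
  by (simp add: matrix_matrix_mult_def mat_def vec_eq_iff if_distrib if_distribR sum.delta' mult.commute cong: if_cong)

lemma mat_comm: "(A::'a::comm_ring_1^'n^'n) ** mat c = mat c ** A"
  by (simp add: mat_mult_left mat_mult_right)

lemma mat_mat: "mat c ** mat d = (mat (c*d) :: 'a::comm_ring_1^'n^'n)"
  by (subst mat_mult_left) (simp add: vec_eq_iff mat_def)

lemma mat_vec: "(mat c :: 'a::comm_ring_1^'n^'n) *v x = c *s x"
  by (simp add: matrix_vector_mult_def mat_def vec_eq_iff if_distrib if_distribR sum.delta' cong: if_cong)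

lemma matvec_mat: "((mat c :: 'a::comm_ring_1^'n^'n) ** A) *v x = c *s (A *v x)"
  by (metis mat_vec matrix_vector_mul_assoc)

lemma mat_assoc2: "mat d ** (mat c ** A) = mat (d*c) ** (A::'a::comm_ring_1^'m^'n)"
  by (simp add: matrix_mul_assoc mat_mat)

lemma mat_prod2: "(mat c ** A) ** (mat d ** B) = mat (c*d) ** ((A::'a::comm_ring_1^'n^'n) ** B)"
proof -
  have "(mat c ** A) ** (mat d ** B) = mat c ** ((A ** mat d) ** B)" by (simp add: matrix_mul_assoc)
  also have "\<dots> = mat c ** (mat d ** (A ** B))" by (simp only: mat_comm[of A d] matrix_mul_assoc)
  also have "\<dots> = mat (c*d) ** (A ** B)" by (rule mat_assoc2)
  finally show ?thesis .
qed

lemma minv: assumes "invertible (A::'a::field^'n^'n)"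
  shows "matrix_inv A ** A = mat 1" "A ** matrix_inv A = mat 1"
proof -
  have "\<exists>A'. A ** A' = mat 1 \<and> A' ** A = mat 1" using assms by (simp add: invertible_def)
  then have "A ** matrix_inv A = mat 1 \<and> matrix_inv A ** A = mat 1"
    unfolding matrix_inv_def by (rule someI_ex)
  then show "matrix_inv A ** A = mat 1" "A ** matrix_inv A = mat 1" by auto
qed

lemma minv_inv: "invertible (A::'a::field^'n^'n) \<Longrightarrow> invertible (matrix_inv A)"
  unfolding invertible_def[of "matrix_inv A"] using minv[of A] by (intro exI[of _ A]) simp

definition cls :: "('a::{field,finite}^3^3) \<Rightarrow> ('a^3^3) set" where
  "cls A = {mat c ** A | c. c \<noteq> 0}"

definition pt :: "('a::{field,finite}^3) \<Rightarrow> ('a^3) set" where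
  "pt v = {c *s v | c. c \<noteq> 0}"

lemma cls_eq: "cls A = cls B \<longleftrightarrow> (\<exists>c. c \<noteq> 0 \<and> B = mat c ** A)"
proof
  assume "cls A = cls B"
  moreover have "B \<in> cls B" unfolding cls_def by (rule CollectI, rule exI[of _ 1], simp)
  ultimately show "\<exists>c. c \<noteq> 0 \<and> B = mat c ** A" unfolding cls_def by auto
next
  assume "\<exists>c. c \<noteq> 0 \<and> B = mat c ** A"
  then obtain c where c: "c \<noteq> 0" "B = mat c ** A" by auto
  show "cls A = cls B"
  proof (rule set_eqI)
    fix X
    show "X \<in> cls A \<longleftrightarrow> X \<in> cls B"
    proof
      assume "X \<in> cls A"
      then obtain e where e: "e \<noteq> 0" "X = mat e ** A" unfolding cls_def by auto
      have "X = mat (e/c) ** B" using c e by (simp add: mat_assoc2)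
      then show "X \<in> cls B" unfolding cls_def using c e by auto
    next
      assume "X \<in> cls B"
      then obtain e where e: "e \<noteq> 0" "X = mat e ** B" unfolding cls_def by auto
      have "X = mat (e*c) ** A" using c e by (simp add: mat_assoc2)
      then show "X \<in> cls A" unfolding cls_def using c e by auto
    qed
  qed
qed

lemma pgl_mult_cls: "pgl_mult (cls A) (cls B) = cls (A ** B)"
proof (rule set_eqI)
  fix X
  show "X \<in> pgl_mult (cls A) (cls B) \<longleftrightarrow> X \<in> cls (A ** B)"
  proof
    assume "X \<in> pgl_mult (cls A) (cls B)"
    then obtain c d where "c \<noteq> 0" "d \<noteq> 0" "X = (mat c ** A) ** (mat d ** B)"
      unfolding pgl_mult_def cls_def by auto
    then have "X = mat (c*d) ** (A ** B)" "c * d \<noteq> 0" by (simp_all only: mat_prod2) simp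
    then show "X \<in> cls (A ** B)" unfolding cls_def by blast
  next
    assume "X \<in> cls (A ** B)"
    then obtain c where "c \<noteq> 0" "X = mat c ** (A ** B)" unfolding cls_def by auto
    then have "X = (mat c ** A) ** (mat 1 ** B)" by (simp add: matrix_mul_assoc)
    moreover have "mat c ** A \<in> cls A" unfolding cls_def using \<open>c \<noteq> 0\<close> by blast
    moreover have "mat 1 ** B \<in> cls B" unfolding cls_def by (rule CollectI, rule exI[of _ 1], simp)
    ultimately show "X \<in> pgl_mult (cls A) (cls B)" unfolding pgl_mult_def by blast
  qed
qed

lemma pgl_inv_cls: assumes "invertible A" shows "pgl_inv (cls A) = cls (matrix_inv A)"
proof (rule set_eqI)
  fix X
  show "X \<in> pgl_inv (cls A) \<longleftrightarrow> X \<in> cls (matrix_inv A)"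
  proof
    assume "X \<in> pgl_inv (cls A)"
    then obtain c where c: "c \<noteq> 0" "X ** (mat c ** A) = mat 1"
      unfolding pgl_inv_def cls_def by auto
    have r: "(mat c ** A) ** (mat (1/c) ** matrix_inv A) = mat 1"
      using c minv[OF assms] by (simp add: mat_prod2)
    have "X = (X ** (mat c ** A)) ** (mat (1/c) ** matrix_inv A)"
      by (metis r matrix_mul_assoc matrix_mul_rid)
    then have "X = mat (1/c) ** matrix_inv A" using c by simp
    then show "X \<in> cls (matrix_inv A)" unfolding cls_def using c by auto
  next
    assume "X \<in> cls (matrix_inv A)"
    then obtain c where c: "c \<noteq> 0" "X = mat c ** matrix_inv A" unfolding cls_def by auto
    have "X ** (mat (1/c) ** A) = mat 1" using c minv[OF assms] by (simp add: mat_prod2)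
    moreover have "mat (1/c) ** A \<in> cls A" unfolding cls_def using c by auto
    ultimately show "X \<in> pgl_inv (cls A)" unfolding pgl_inv_def by blast
  qed
qed

lemma pgl_act_cls: "pgl_act (cls A) (pt v) = pt (A *v v)"
proof (rule set_eqI)
  fix x
  show "x \<in> pgl_act (cls A) (pt v) \<longleftrightarrow> x \<in> pt (A *v v)"
  proof
    assume "x \<in> pgl_act (cls A) (pt v)"
    then obtain c d where "c \<noteq> 0" "d \<noteq> 0" "x = (mat c ** A) *v (d *s v)"
      unfolding pgl_act_def cls_def pt_def by auto
    have "(mat c ** A) *v (d *s v) = c *s (A *v (d *s v))" by (rule matvec_mat)
    also have "\<dots> = c *s (d *s (A *v v))" by (simp only: vector_scalar_commute)
    also have "\<dots> = (c*d) *s (A *v v)" by (simp only: vector_smult_assoc)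
    finally have "x = (c*d) *s (A *v v)" "c * d \<noteq> 0" using \<open>x = _\<close> \<open>c \<noteq> 0\<close> \<open>d \<noteq> 0\<close> by auto
    then show "x \<in> pt (A *v v)" unfolding pt_def by auto
  next
    assume "x \<in> pt (A *v v)"
    then obtain c where c: "c \<noteq> 0" "x = c *s (A *v v)" unfolding pt_def by auto
    then have "x = (mat c ** A) *v (1 *s v)" by (simp add: matvec_mat)
    moreover have "mat c ** A \<in> cls A" unfolding cls_def using c by auto
    moreover have "1 *s v \<in> pt v" unfolding pt_def by (rule CollectI, rule exI[of _ 1], simp)
    ultimately show "x \<in> pgl_act (cls A) (pt v)" unfolding pgl_act_def by blast
  qed
qed

lemma pt_eq: assumes "x \<noteq> 0" shows "pt x = pt y \<longleftrightarrow> (\<exists>c. c \<noteq> 0 \<and> y = c *s x)"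
proof
  assume "pt x = pt y"
  moreover have "y \<in> pt y" unfolding pt_def by (rule CollectI, rule exI[of _ 1], simp)
  ultimately show "\<exists>c. c \<noteq> 0 \<and> y = c *s x" unfolding pt_def by auto
next
  assume "\<exists>c. c \<noteq> 0 \<and> y = c *s x"
  then obtain c where c: "c \<noteq> 0" "y = c *s x" by auto
  show "pt x = pt y"
  proof (rule set_eqI)
    fix z
    show "z \<in> pt x \<longleftrightarrow> z \<in> pt y"
    proof
      assume "z \<in> pt x"
      then obtain e where e: "e \<noteq> 0" "z = e *s x" unfolding pt_def by auto
      have "z = (e/c) *s y" using c e by (simp add: vector_smult_assoc)
      then show "z \<in> pt y" unfolding pt_def using c e by (auto intro!: exI[of _ "e/c"])
    next
      assume "z \<in> pt y"
      then obtain e where e: "e \<noteq> 0" "z = e *s y" unfolding pt_def by auto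
      have "z = (e*c) *s x" using c e by (simp add: vector_smult_assoc)
      then show "z \<in> pt x" unfolding pt_def using c e by (auto intro!: exI[of _ "e*c"])
    qed
  qed
qed

lemma PG2_eq: "PG2_points = pt ` {v. v \<noteq> 0}"
  unfolding PG2_points_def pt_def by auto

lemma PGL3_eq: "PGL3 = cls ` {A. invertible A}"
  unfolding PGL3_def cls_def by auto

definition EV :: "'a::field^3^3 \<Rightarrow> bool" where
  "EV A \<longleftrightarrow> (\<exists>v l. v \<noteq> 0 \<and> A *v v = l *s v)"

lemma derangement_cls: assumes "invertible (A::'a::{field,finite}^3^3)"
  shows "derangement (cls A) \<longleftrightarrow> \<not> EV A"
proof -
  have inPGL: "cls A \<in> PGL3" using assms PGL3_eq by auto
  have "(\<exists>v. v \<noteq> 0 \<and> pt (A *v v) = pt v) \<longleftrightarrow> EV A"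
  proof
    assume "\<exists>v. v \<noteq> 0 \<and> pt (A *v v) = pt v"
    then obtain v where "v \<noteq> 0" "pt v = pt (A *v v)" by metis
    then show "EV A" unfolding EV_def using pt_eq by blast
  next
    assume "EV A"
    then obtain v l where v: "v \<noteq> 0" "A *v v = l *s v" unfolding EV_def by auto
    have "l \<noteq> 0"
    proof
      assume "l = 0"
      then have "A *v v = A *v 0" using v by simp
      then have "v = 0" by (rule injD[OF inj_matrix_vector_mult[OF assms]])
      then show False using v by simp
    qed
    then have "pt v = pt (A *v v)" using pt_eq[OF v(1)] v by auto
    then show "\<exists>v. v \<noteq> 0 \<and> pt (A *v v) = pt v" using v by metis
  qed
  moreover have "derangement (cls A) \<longleftrightarrow> (\<forall>P\<in>PG2_points. pgl_act (cls A) P \<noteq> P)"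
    using inPGL unfolding derangement_def by simp
  moreover have "(\<forall>P\<in>PG2_points. pgl_act (cls A) P \<noteq> P) \<longleftrightarrow> (\<forall>v. v \<noteq> 0 \<longrightarrow> pt (A *v v) \<noteq> pt v)"
    unfolding PG2_eq by (simp add: pgl_act_cls)
  ultimately show ?thesis by blast
qed



lemma key_eigen:
  fixes f :: "'a::field^3 \<Rightarrow> 'a^3"
  assumes sc: "\<And>c x. f (c *s x) = c *s f x"
   and ch: "\<And>x. f (f (f x)) = r0 *s x + r1 *s f x + r2 *s f (f x)"
   and nr: "\<And>t. t^3 \<noteq> r2*t^2 + r1*t + r0"
   and x: "x \<noteq> 0" and e: "f x = m *s x"
  shows False
proof -
  have e2: "f (f x) = (m*m) *s x" using e sc by (simp add: vector_smult_assoc)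
  have e3: "f (f (f x)) = (m*m*m) *s x" using e2 sc e by (simp add: vector_smult_assoc)
  have E: "(m*m*m) *s x = r0 *s x + r1 *s (m *s x) + r2 *s ((m*m) *s x)"
    using ch[of x] e e2 e3 by simp
  have "((m*m*m - (r0 + r1*m + r2*(m*m))) *s x) $ i = 0" for i
  proof -
    have "((m*m*m) *s x) $ i = (r0 *s x + r1 *s (m *s x) + r2 *s ((m*m) *s x)) $ i"
      by (rule arg_cong[OF E])
    then show ?thesis by (simp add: algebra_simps)
  qed
  then have "(m*m*m - (r0 + r1*m + r2*(m*m))) *s x = 0"
    unfolding vec_eq_iff by simp
  then have "m*m*m - (r0 + r1*m + r2*(m*m)) = 0 \<or> x = 0" by (simp only: vector_mul_eq_0)
  then have "m*m*m - (r0 + r1*m + r2*(m*m)) = 0" using x by blast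
  then have "m^3 = r2*m^2 + r1*m + r0" by (simp add: power3_eq_cube power2_eq_square algebra_simps)
  then show False using nr by blast
qed

lemma key_lin2:
  fixes f :: "'a::field^3 \<Rightarrow> 'a^3"
  assumes sc: "\<And>c x. f (c *s x) = c *s f x"
   and ch: "\<And>x. f (f (f x)) = r0 *s x + r1 *s f x + r2 *s f (f x)"
   and nr: "\<And>t. t^3 \<noteq> r2*t^2 + r1*t + r0"
   and x: "x \<noteq> 0" and e: "a *s x + b *s f x = 0"
  shows "a = 0 \<and> b = 0"
proof (cases "b = 0")
  case True
  then show ?thesis using e x by simp
next
  case False
  have "f x = (-a/b) *s x"
    using e False by (simp add: vec_eq_iff field_simps) (metis add_eq_0_iff mult.commute)
  then show ?thesis using key_eigen[OF sc ch nr x] by blast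
qed

lemma key3:
  fixes f :: "'a::field^3 \<Rightarrow> 'a^3"
  assumes add: "\<And>x y. f (x + y) = f x + f y"
   and sc: "\<And>c x. f (c *s x) = c *s f x"
   and ch: "\<And>x. f (f (f x)) = r0 *s x + r1 *s f x + r2 *s f (f x)"
   and nr: "\<And>t. t^3 \<noteq> r2*t^2 + r1*t + r0"
   and x: "x \<noteq> 0" and e: "a *s x + b *s f x + c *s f (f x) = 0"
  shows "a = 0 \<and> b = 0 \<and> c = 0"
proof (cases "c = 0")
  case True
  then show ?thesis using key_lin2[OF sc ch nr x, of a b] e by simp
next
  case False
  define al where "al = -a/c"
  define be where "be = -b/c"
  have ff: "f (f x) = al *s x + be *s f x"
    using e False unfolding al_def be_def
    by (simp add: vec_eq_iff field_simps) (metis add.commute add_eq_0_iff mult.commute)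
  have "f (f (f x)) = al *s f x + be *s f (f x)" using ff add sc by simp
  also have "\<dots> = (be*al) *s x + (al + be*be) *s f x" unfolding ff
    by (simp add: vec_eq_iff algebra_simps)
  finally have A: "f (f (f x)) = (be*al) *s x + (al + be*be) *s f x" .
  have B0: "f (f (f x)) = r0 *s x + r1 *s f x + r2 *s (al *s x + be *s f x)"
    unfolding ff[symmetric] by (rule ch)
  have B: "f (f (f x)) = (r0 + r2*al) *s x + (r1 + r2*be) *s f x"
    unfolding B0 by (simp add: vec_eq_iff algebra_simps)
  have "(be*al - r0 - r2*al) *s x + (al + be*be - r1 - r2*be) *s f x = 0"
    using A B by (simp add: vec_eq_iff algebra_simps)
  then have s: "be*al - r0 - r2*al = 0" "al + be*be - r1 - r2*be = 0"
    using key_lin2[OF sc ch nr x] by blast+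
  have r0: "r0 = be*al - r2*al" and r1: "r1 = al + be*be - r2*be" using s by (simp_all add: algebra_simps)
  have "(r2 - be)^3 = r2*(r2-be)^2 + r1*(r2-be) + r0"
    unfolding r0 r1 by (simp add: power3_eq_cube power2_eq_square algebra_simps)
  then show ?thesis using nr by blast
qed



lemma exists_nr: "\<exists>r0 r1 r2::'a::{field,finite}. \<forall>t. t^3 \<noteq> r2*t^2 + r1*t + r0"
proof -
  define F :: "'a \<times> 'a \<times> 'a \<Rightarrow> 'a \<times> 'a \<times> 'a" where
    "F = (\<lambda>(t, r1, r2). (t^3 - r2*t^2 - r1*t, r1, r2))"
  have "F (0, 1, 0) = F (1, 1, 0)" unfolding F_def by simp
  then have "\<not> inj F" unfolding inj_def by force
  then have "\<not> surj F" using finite_UNIV_surj_inj[of F] by auto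
  then obtain r where "r \<notin> range F" by auto
  obtain r0 r1 r2 where r: "r = (r0, r1, r2)" by (cases r) auto
  have "t^3 \<noteq> r2*t^2 + r1*t + r0" for t
  proof
    assume "t^3 = r2*t^2 + r1*t + r0"
    then have "F (t, r1, r2) = r" unfolding F_def r by (simp add: algebra_simps)
    then show False using \<open>r \<notin> range F\<close> by auto
  qed
  then show ?thesis by blast
qed

definition compM :: "'a::field \<Rightarrow> 'a \<Rightarrow> 'a \<Rightarrow> 'a^3^3" where
  "compM r0 r1 r2 = (\<chi> i j. if i = 1 then (if j = 3 then r0 else 0)
     else if i = 2 then (if j = 1 then 1 else if j = 3 then r1 else 0)
     else (if j = 2 then 1 else if j = 3 then r2 else 0))"

lemma compM_vec: "compM r0 r1 r2 *v x =
   (\<chi> i. if i = 1 then r0 * x$3 else if i = 2 then x$1 + r1 * x$3 else x$2 + r2 * x$3)"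
  unfolding vec_eq_iff forall_3 by (simp add: matrix_vector_mult_def sum_3 compM_def)

lemma compM_ch: "compM r0 r1 r2 *v (compM r0 r1 r2 *v (compM r0 r1 r2 *v x)) =
   r0 *s x + r1 *s (compM r0 r1 r2 *v x) + r2 *s (compM r0 r1 r2 *v (compM r0 r1 r2 *v x))"
  unfolding compM_vec vec_eq_iff forall_3 by (simp add: algebra_simps)

definition Ym :: "'a::field \<Rightarrow> 'a \<Rightarrow> 'a \<Rightarrow> 'a^3 \<Rightarrow> 'a^3^3" where
  "Ym r0 r1 r2 w = mat (w$1) + mat (w$2) ** compM r0 r1 r2 + mat (w$3) ** (compM r0 r1 r2 ** compM r0 r1 r2)"

lemma Ym_vec: "Ym r0 r1 r2 w *v x = w$1 *s x + w$2 *s (compM r0 r1 r2 *v x)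
   + w$3 *s (compM r0 r1 r2 *v (compM r0 r1 r2 *v x))"
  unfolding Ym_def by (simp add: matrix_vector_mult_add_rdistrib mat_vec matvec_mat matrix_vector_mul_assoc)

definition e1 :: "'a::field^3" where "e1 = (\<chi> i. if i = 1 then 1 else 0)"

lemma e1_nz: "e1 \<noteq> 0" unfolding e1_def vec_eq_iff by (auto intro!: exI[of _ 1])

lemma Ym_e1: "Ym r0 r1 r2 w *v e1 = w"
  unfolding Ym_vec compM_vec e1_def vec_eq_iff forall_3 by simp

lemma Ym_inj:
  assumes nr: "\<And>t. t^3 \<noteq> r2*t^2 + r1*t + r0" and w: "w \<noteq> 0" and x: "Ym r0 r1 r2 w *v x = 0"
  shows "x = 0"
proof (rule ccontr)
  assume "x \<noteq> 0"
  have "w$1 = 0 \<and> w$2 = 0 \<and> w$3 = 0"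
    by (rule key3[where f = "\<lambda>x. compM r0 r1 r2 *v x", OF _ _ compM_ch nr \<open>x \<noteq> 0\<close>])
       (use x in \<open>simp_all add: matrix_vector_right_distrib vector_scalar_commute Ym_vec\<close>)
  then show False using w unfolding vec_eq_iff forall_3 by simp
qed

lemma Ym_invertible:
  assumes nr: "\<And>t. t^3 \<noteq> r2*t^2 + r1*t + r0" and w: "w \<noteq> 0"
  shows "invertible (Ym r0 r1 r2 w)"
  unfolding invertible_left_inverse matrix_left_invertible_ker using Ym_inj[OF nr w] by blast

lemma Ym_scale: "Ym r0 r1 r2 (c *s w) = mat c ** Ym r0 r1 r2 w"
  unfolding matrix_eq by (simp add: matvec_mat Ym_vec vec_eq_iff algebra_simps)

lemma Ym_lin: "Ym r0 r1 r2 w' *v x - l *s (Ym r0 r1 r2 w *v x) = Ym r0 r1 r2 (w' - l *s w) *v x"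
  by (simp add: Ym_vec vec_eq_iff algebra_simps)



lemma card_nz: "card {x::'a::{field,finite}. x \<noteq> 0} = CARD('a) - 1"
proof -
  have "{x::'a. x \<noteq> 0} = UNIV - {0}" by auto
  then show ?thesis by (simp add: card_Diff_subset)
qed

definition GL2 :: "('a::field \<times> 'a \<times> 'a \<times> 'a) set" where
  "GL2 = {(a,b,c,d). a*d - b*c \<noteq> 0}"

lemma card_GL2: "card (GL2 :: ('a::{field,finite} \<times> 'a \<times> 'a \<times> 'a) set)
   = (CARD('a) - 1) * (CARD('a) - 1) * CARD('a) + (CARD('a) - 1) * (CARD('a) * (CARD('a) * (CARD('a) - 1)))"
proof -
  define N :: "'a set" where "N = {x. x \<noteq> 0}"
  define G0 :: "('a \<times> 'a \<times> 'a \<times> 'a) set" where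
    "G0 = (\<lambda>(b,c,d). (0,b,c,d)) ` (N \<times> N \<times> UNIV)"
  define G1 :: "('a \<times> 'a \<times> 'a \<times> 'a) set" where
    "G1 = (\<lambda>(a,b,c,e). (a,b,c,e + b*c/a)) ` (N \<times> UNIV \<times> UNIV \<times> N)"
  have split: "GL2 = G0 \<union> G1"
  proof (rule set_eqI)
    fix z :: "'a \<times> 'a \<times> 'a \<times> 'a"
    obtain a b c d where z: "z = (a,b,c,d)" by (cases z) auto
    show "z \<in> GL2 \<longleftrightarrow> z \<in> G0 \<union> G1"
    proof
      assume "z \<in> GL2"
      then have det: "a*d - b*c \<noteq> 0" unfolding GL2_def z by simp
      show "z \<in> G0 \<union> G1"
      proof (cases "a = 0")
        case True
        then have "z = (\<lambda>(b,c,d). (0,b,c,d)) (b,c,d)" "(b,c,d) \<in> N \<times> N \<times> UNIV"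
          using det z unfolding N_def by auto
        then show ?thesis unfolding G0_def by blast
      next
        case False
        then have "z = (\<lambda>(a,b,c,e). (a,b,c,e + b*c/a)) (a,b,c,d - b*c/a)"
          "(a,b,c,d - b*c/a) \<in> N \<times> UNIV \<times> UNIV \<times> N"
          using det z unfolding N_def by (auto simp: field_simps)
        then show ?thesis unfolding G1_def by blast
      qed
    next
      assume "z \<in> G0 \<union> G1"
      then show "z \<in> GL2" unfolding G0_def G1_def GL2_def N_def by (auto simp: field_simps)
    qed
  qed
  have disj: "G0 \<inter> G1 = {}" unfolding G0_def G1_def N_def by auto
  have c0: "card G0 = (CARD('a) - 1) * (CARD('a) - 1) * CARD('a)"
  proof -
    have "inj_on (\<lambda>(b,c,d). (0::'a,b,c,d)) (N \<times> N \<times> UNIV)" by (auto simp: inj_on_def)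
    then have "card G0 = card (N \<times> N \<times> (UNIV::'a set))" unfolding G0_def by (rule card_image)
    then show ?thesis by (simp add: card_cartesian_product N_def card_nz)
  qed
  have c1: "card G1 = (CARD('a) - 1) * (CARD('a) * (CARD('a) * (CARD('a) - 1)))"
  proof -
    have "inj_on (\<lambda>(a,b,c,e). (a,b,c,e + b*c/a)) (N \<times> (UNIV::'a set) \<times> (UNIV::'a set) \<times> N)"
      by (auto simp: inj_on_def)
    then have "card G1 = card (N \<times> (UNIV::'a set) \<times> (UNIV::'a set) \<times> N)" unfolding G1_def by (rule card_image)
    then show ?thesis by (simp add: card_cartesian_product N_def card_nz)
  qed
  show ?thesis unfolding split using disj c0 c1 by (simp add: card_Un_disjoint)
qed

definition mk :: "'a::field \<times> 'a \<times> 'a \<times> 'a \<times> 'a \<times> 'a \<Rightarrow> 'a^3^3" where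
  "mk = (\<lambda>(x,y,a,b,c,d). (\<chi> i j. if i = 1 then (if j = 1 then 1 else if j = 2 then x else y)
      else if i = 2 then (if j = 1 then 0 else if j = 2 then a else b)
      else (if j = 1 then 0 else if j = 2 then c else d)))"

lemma mk_det: "det (mk (x,y,a,b,c,d)) = a*d - b*c"
  unfolding det_3 mk_def by (simp add: algebra_simps)

lemma mk_e1: "mk z *v e1 = e1"
  by (cases z) (simp add: mk_def e1_def vec_eq_iff forall_3 matrix_vector_mult_def sum_3)

lemma U_eq: "{A::'a::{field}^3^3. invertible A \<and> A *v e1 = e1} = mk ` (UNIV \<times> UNIV \<times> GL2)"
proof (rule set_eqI)
  fix A :: "'a^3^3"
  show "A \<in> {A. invertible A \<and> A *v e1 = e1} \<longleftrightarrow> A \<in> mk ` (UNIV \<times> UNIV \<times> GL2)"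
  proof
    assume "A \<in> {A. invertible A \<and> A *v e1 = e1}"
    then have inv: "invertible A" and col: "A *v e1 = e1" by auto
    from col have c: "A$1$1 = 1" "A$2$1 = 0" "A$3$1 = 0"
      by (simp_all add: e1_def vec_eq_iff forall_3 matrix_vector_mult_def sum_3)
    have Aeq: "A = mk (A$1$2, A$1$3, A$2$2, A$2$3, A$3$2, A$3$3)"
      unfolding mk_def vec_eq_iff forall_3 using c by simp
    have "det A \<noteq> 0" using inv by (simp add: invertible_det_nz)
    then have "A$2$2 * A$3$3 - A$2$3 * A$3$2 \<noteq> 0" using Aeq mk_det by metis
    then have "(A$1$2, A$1$3, A$2$2, A$2$3, A$3$2, A$3$3) \<in> UNIV \<times> UNIV \<times> GL2"
      unfolding GL2_def by simp
    then show "A \<in> mk ` (UNIV \<times> UNIV \<times> GL2)" using Aeq by blast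
  next
    assume "A \<in> mk ` (UNIV \<times> UNIV \<times> GL2)"
    then obtain x y a b c d where A: "A = mk (x,y,a,b,c,d)" and g: "(a,b,c,d) \<in> GL2" by auto
    have "invertible A" using g A unfolding GL2_def by (simp add: invertible_det_nz mk_det)
    then show "A \<in> {A. invertible A \<and> A *v e1 = e1}" using A mk_e1 by simp
  qed
qed

lemma mk_inj: "inj mk"
proof (rule injI)
  fix z z' :: "'a \<times> 'a \<times> 'a \<times> 'a \<times> 'a \<times> 'a"
  assume e: "mk z = mk z'"
  obtain x y a b c d where z: "z = (x,y,a,b,c,d)" by (cases z) auto
  obtain x' y' a' b' c' d' where z': "z' = (x',y',a',b',c',d')" by (cases z') auto
  have "mk z $1$2 = mk z' $1$2" "mk z $1$3 = mk z' $1$3" "mk z $2$2 = mk z' $2$2"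
       "mk z $2$3 = mk z' $2$3" "mk z $3$2 = mk z' $3$2" "mk z $3$3 = mk z' $3$3" using e by simp_all
  then show "z = z'" unfolding z z' mk_def by simp
qed

lemma card_U: "card {A::'a::{field,finite}^3^3. invertible A \<and> A *v e1 = e1}
   = CARD('a)^3 * (CARD('a)^2 - 1) * (CARD('a) - 1)"
proof -
  have "card {A::'a^3^3. invertible A \<and> A *v e1 = e1} = card ((UNIV::'a set) \<times> (UNIV::'a set) \<times> (GL2::('a\<times>'a\<times>'a\<times>'a) set))"
    unfolding U_eq by (rule card_image, rule inj_on_subset[OF mk_inj], simp)
  also have "\<dots> = CARD('a) * CARD('a) * card (GL2::('a\<times>'a\<times>'a\<times>'a) set)"
    by (simp add: card_cartesian_product)
  also have "\<dots> = CARD('a)^3 * (CARD('a)^2 - 1) * (CARD('a) - 1)"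
  proof -
    have "CARD('a) \<noteq> 0" by simp
    then obtain k where k: "CARD('a) = Suc k" using not0_implies_Suc by blast
    show ?thesis unfolding card_GL2 k by (simp add: algebra_simps power2_eq_square power3_eq_cube)
  qed
  finally show ?thesis .
qed



lemma PGL3_rep: "g \<in> PGL3 \<Longrightarrow> \<exists>A. invertible A \<and> g = cls A"
  unfolding PGL3_eq by auto

lemma cls_in_PGL3: "invertible A \<Longrightarrow> cls A \<in> PGL3"
  unfolding PGL3_eq by auto

lemma act_fix: "pgl_act (cls A) (pt e1) = pt e1 \<longleftrightarrow> (\<exists>a. a \<noteq> 0 \<and> A *v e1 = a *s e1)"
  unfolding pgl_act_cls using pt_eq[OF e1_nz, of "A *v e1"] by metis

lemma inv_on_e1:
  assumes "invertible B" "B *v e1 = b *s e1" "b \<noteq> 0"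
  shows "matrix_inv B *v e1 = (1/b) *s e1"
proof -
  have "e1 = matrix_inv B *v (B *v e1)" by (simp add: matrix_vector_mul_assoc minv[OF assms(1)])
  also have "\<dots> = b *s (matrix_inv B *v e1)" using assms(2) by (simp add: vector_scalar_commute)
  finally have "(1/b) *s e1 = (1/b) *s (b *s (matrix_inv B *v e1))" by simp
  then show ?thesis using assms(3) by (simp add: vector_smult_assoc)
qed

lemma adj_cls:
  assumes "invertible A" "invertible B"
  shows "derangement_adj (cls A) (cls B) \<longleftrightarrow> \<not> EV (A ** matrix_inv B)"
proof -
  have i: "invertible (A ** matrix_inv B)" using assms by (simp add: invertible_mult minv_inv)
  show ?thesis unfolding derangement_adj_def pgl_inv_cls[OF assms(2)] pgl_mult_cls
    using derangement_cls[OF i] .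
qed

definition Stab :: "('a::{field,finite}^3^3) set set" where
  "Stab = {g \<in> PGL3. pgl_act g (pt e1) = pt e1}"

lemma Stab_indep: "independent_set (Stab :: ('a::{field,finite}^3^3) set set)"
  unfolding independent_set_def
proof (intro conjI ballI)
  show "Stab \<subseteq> PGL3" unfolding Stab_def by auto
next
  fix g h :: "('a^3^3) set"
  assume g: "g \<in> Stab" and h: "h \<in> Stab"
  obtain A where A: "invertible A" "g = cls A" using g PGL3_rep unfolding Stab_def by blast
  obtain B where B: "invertible B" "h = cls B" using h PGL3_rep unfolding Stab_def by blast
  obtain a where a: "a \<noteq> 0" "A *v e1 = a *s e1" using g A act_fix unfolding Stab_def by blast
  obtain b where b: "b \<noteq> 0" "B *v e1 = b *s e1" using h B act_fix unfolding Stab_def by blast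
  have "(A ** matrix_inv B) *v e1 = (a/b) *s e1"
    using inv_on_e1[OF B(1) b(2) b(1)] a
    by (simp add: matrix_vector_mul_assoc[symmetric] vector_scalar_commute vector_smult_assoc)
  then have "EV (A ** matrix_inv B)" unfolding EV_def using e1_nz by blast
  then show "\<not> derangement_adj g h" using adj_cls[OF A(1) B(1)] A B by simp
qed

lemma invertible_scaled: "invertible A \<Longrightarrow> c \<noteq> 0 \<Longrightarrow> invertible (mat c ** (A::'a::field^'n^'n))"
  unfolding invertible_left_inverse
proof -
  assume "\<exists>B. B ** A = mat 1" "c \<noteq> 0"
  then obtain B where B: "B ** A = mat 1" by blast
  have "(mat (1/c) ** B) ** (mat c ** A) = mat 1" using B \<open>c \<noteq> 0\<close> by (simp add: mat_prod2)
  then show "\<exists>B. B ** (mat c ** A) = mat 1" by blast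
qed

lemma card_Stab: "card (Stab :: ('a::{field,finite}^3^3) set set) = card {A::'a^3^3. invertible A \<and> A *v e1 = e1}"
proof -
  let ?U = "{A::'a^3^3. invertible A \<and> A *v e1 = e1}"
  have SE: "Stab = cls ` ?U"
  proof
    show "cls ` ?U \<subseteq> Stab"
    proof
      fix g assume "g \<in> cls ` ?U"
      then obtain A where A: "invertible A" "A *v e1 = e1" "g = cls A" by auto
      have "pgl_act g (pt e1) = pt e1" using A act_fix[of A] by (metis one_neq_zero vector_smult_lid)
      then show "g \<in> Stab" unfolding Stab_def using cls_in_PGL3 A by auto
    qed
  next
    show "Stab \<subseteq> cls ` ?U"
    proof
      fix g :: "('a^3^3) set" assume g: "g \<in> Stab"
      obtain A where A: "invertible A" "g = cls A" using g PGL3_rep unfolding Stab_def by blast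
      obtain a where a: "a \<noteq> 0" "A *v e1 = a *s e1" using g A act_fix unfolding Stab_def by blast
      define A' where "A' = mat (1/a) ** A"
      have "invertible A'" unfolding A'_def using a by (intro invertible_scaled[OF A(1)]) simp
      moreover have "A' *v e1 = e1" unfolding A'_def using a by (simp add: matvec_mat vector_smult_assoc)
      moreover have "cls A = cls A'" unfolding cls_eq A'_def using a by (intro exI[of _ "1/a"]) simp
      ultimately show "g \<in> cls ` ?U" using A by auto
    qed
  qed
  have INJ: "inj_on cls ?U"
  proof (rule inj_onI)
    fix A B assume A: "A \<in> ?U" and B: "B \<in> ?U" and e: "cls A = cls B"
    then obtain c where c: "c \<noteq> 0" "B = mat c ** A" unfolding cls_eq by blast
    have "e1 = c *s e1" using A B c by (metis (mono_tags, lifting) matvec_mat mem_Collect_eq)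
    then have "e1 $ 1 = (c *s e1) $ 1" by simp
    then have "c = 1" unfolding e1_def by simp
    then show "A = B" using c by simp
  qed
  have "card (Stab :: ('a^3^3) set set) = card (cls ` ?U)" by (simp only: SE)
  also have "\<dots> = card ?U" using INJ by (rule card_image)
  finally show ?thesis .
qed



lemma EV_conj:
  assumes A: "invertible (A::'a::field^3^3)" and mu: "mu \<noteq> 0"
    and ev: "EV (mat mu ** (A ** Z ** matrix_inv A))"
  shows "EV Z"
proof -
  obtain v l where v: "v \<noteq> 0" "(mat mu ** (A ** Z ** matrix_inv A)) *v v = l *s v"
    using ev unfolding EV_def by blast
  define u where "u = matrix_inv A *v v"
  have vu: "v = A *v u" unfolding u_def by (simp add: matrix_vector_mul_assoc minv[OF A])
  have "u \<noteq> 0" using v vu by auto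
  have "(mat mu ** (A ** Z ** matrix_inv A)) *v v = A *v (mu *s (Z *v u))"
    unfolding u_def by (simp add: mat_vec matrix_vector_mul_assoc[symmetric] vector_scalar_commute)
  then have "A *v (mu *s (Z *v u)) = A *v (l *s u)" using v vu by (simp add: vector_scalar_commute)
  then have "mu *s (Z *v u) = l *s u" by (rule injD[OF inj_matrix_vector_mult[OF A]])
  then have "(1/mu) *s (mu *s (Z *v u)) = (1/mu) *s (l *s u)" by simp
  then have "Z *v u = (l/mu) *s u" using mu by (simp add: vector_smult_assoc)
  then show ?thesis unfolding EV_def using \<open>u \<noteq> 0\<close> by blast
qed

lemma Phi_cls: "invertible X \<Longrightarrow> pgl_mult (cls A) (pgl_inv (cls X)) = cls (A ** matrix_inv X)"
  by (simp add: pgl_inv_cls pgl_mult_cls)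

lemma key_inj:
  assumes nr: "\<And>t. t^3 \<noteq> r2*t^2 + r1*t + r0"
    and w: "w \<noteq> 0" and w': "w' \<noteq> 0" and A: "invertible A" and A': "invertible A'"
    and ev: "EV (A' ** matrix_inv A)"
    and e: "cls (A ** matrix_inv (Ym r0 r1 r2 w)) = cls (A' ** matrix_inv (Ym r0 r1 r2 w'))"
  shows "cls (Ym r0 r1 r2 w) = cls (Ym r0 r1 r2 w') \<and> cls A = cls A'"
proof -
  let ?Y = "Ym r0 r1 r2 w" and ?Y' = "Ym r0 r1 r2 w'"
  have Yi: "invertible ?Y" "invertible ?Y'" using Ym_invertible[OF nr] w w' by auto
  obtain mu where mu: "mu \<noteq> 0" "A' ** matrix_inv ?Y' = mat mu ** (A ** matrix_inv ?Y)"
    using e unfolding cls_eq by blast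
  have A'eq: "A' = (mat mu ** (A ** matrix_inv ?Y)) ** ?Y'"
    by (metis mu(2) matrix_mul_assoc matrix_mul_rid minv(1)[OF Yi(2)])
  have "A' ** matrix_inv A = mat mu ** (A ** (matrix_inv ?Y ** ?Y') ** matrix_inv A)"
    unfolding A'eq by (simp add: matrix_mul_assoc)
  then have "EV (matrix_inv ?Y ** ?Y')" using EV_conj[OF A mu(1)] ev by simp
  then obtain u l where u: "u \<noteq> 0" "(matrix_inv ?Y ** ?Y') *v u = l *s u"
    unfolding EV_def by blast
  have "?Y' *v u = ?Y *v ((matrix_inv ?Y ** ?Y') *v u)"
    by (simp add: matrix_vector_mul_assoc matrix_mul_assoc minv(2)[OF Yi(1)])
  also have "\<dots> = l *s (?Y *v u)" using u by (simp add: vector_scalar_commute)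
  finally have "Ym r0 r1 r2 (w' - l *s w) *v u = 0" unfolding Ym_lin[symmetric] by simp
  then have "w' - l *s w = 0" using Ym_inj[OF nr _ _] u(1) by blast
  then have wl: "w' = l *s w" by simp
  then have "l \<noteq> 0" using w' by auto
  have Y'eq: "?Y' = mat l ** ?Y" unfolding wl Ym_scale ..
  have c1: "cls ?Y = cls ?Y'" unfolding cls_eq using Y'eq \<open>l \<noteq> 0\<close> by blast
  have "A' = mat (mu*l) ** ((A ** matrix_inv ?Y) ** ?Y)" unfolding A'eq Y'eq mat_prod2 ..
  then have "A' = mat (mu*l) ** A" by (simp add: matrix_mul_assoc[symmetric] minv(1)[OF Yi(1)])
  then have "cls A = cls A'" unfolding cls_eq using mu(1) \<open>l \<noteq> 0\<close> by (intro exI[of _ "mu*l"]) simp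
  then show ?thesis using c1 by blast
qed

lemma surj_lemma:
  assumes nr: "\<And>t. t^3 \<noteq> r2*t^2 + r1*t + r0" and h: "h \<in> PGL3"
  shows "\<exists>w G. w \<noteq> 0 \<and> invertible G \<and> G *v e1 = e1 \<and> h = cls (G ** matrix_inv (Ym r0 r1 r2 w))"
proof -
  obtain H where H: "invertible H" "h = cls H" using PGL3_rep h by blast
  define w where "w = matrix_inv H *v e1"
  have Hw: "H *v w = e1" unfolding w_def by (simp add: matrix_vector_mul_assoc minv(2)[OF H(1)])
  have w0: "w \<noteq> 0" using Hw e1_nz by auto
  let ?Y = "Ym r0 r1 r2 w"
  have Yi: "invertible ?Y" using Ym_invertible[OF nr w0] .
  define G where "G = H ** ?Y"
  have "invertible G" unfolding G_def using H Yi by (simp add: invertible_mult)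
  moreover have "G *v e1 = e1" unfolding G_def by (simp add: matrix_vector_mul_assoc[symmetric] Ym_e1 Hw)
  moreover have "G ** matrix_inv ?Y = H" unfolding G_def
    by (simp add: matrix_mul_assoc[symmetric] minv(2)[OF Yi])
  ultimately show ?thesis using w0 H by metis
qed



theorem mainTheorem6:
  defines "q \<equiv> CARD('a::{field,finite})"
  shows "Max (card ` {S :: ('a ^ 3 ^ 3) set set. independent_set S})
           = q ^ 3 * (q ^ 2 - 1) * (q - 1)"
proof -
  obtain r0 r1 r2 :: 'a where nr: "\<And>t. t^3 \<noteq> r2*t^2 + r1*t + r0" using exists_nr by blast
  define C :: "('a^3^3) set set" where "C = (\<lambda>w. cls (Ym r0 r1 r2 w)) ` {w. w \<noteq> 0}"
  define Phi :: "('a^3^3) set \<times> ('a^3^3) set \<Rightarrow> ('a^3^3) set" where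
    "Phi = (\<lambda>p. pgl_mult (snd p) (pgl_inv (fst p)))"
  have finS: "finite (X :: ('a^3^3) set set)" for X by (rule finite_subset[OF subset_UNIV]) simp
  have Cne: "C \<noteq> {}" unfolding C_def using e1_nz by blast
  have cardC: "card C > 0" using Cne finS[of C] by (simp add: card_gt_0_iff)
  have upper: "card C * card S \<le> card (PGL3 :: ('a^3^3) set set)" if S: "independent_set (S :: ('a^3^3) set set)" for S
  proof -
    have SP: "S \<subseteq> PGL3" using S unfolding independent_set_def by blast
    have inj: "inj_on Phi (C \<times> S)"
    proof (rule inj_onI)
      fix p p' assume p: "p \<in> C \<times> S" and p': "p' \<in> C \<times> S" and e: "Phi p = Phi p'"
      obtain c g where pc: "p = (c, g)" "c \<in> C" "g \<in> S" using p by auto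
      obtain c' g' where pc': "p' = (c', g')" "c' \<in> C" "g' \<in> S" using p' by auto
      obtain w where w: "w \<noteq> 0" "c = cls (Ym r0 r1 r2 w)" using pc unfolding C_def by auto
      obtain w' where w': "w' \<noteq> 0" "c' = cls (Ym r0 r1 r2 w')" using pc' unfolding C_def by auto
      obtain A where A: "invertible A" "g = cls A" using PGL3_rep pc SP by blast
      obtain A' where A': "invertible A'" "g' = cls A'" using PGL3_rep pc' SP by blast
      have "\<not> derangement_adj g' g" using S pc pc' unfolding independent_set_def by blast
      then have ev: "EV (A' ** matrix_inv A)" using adj_cls[OF A'(1) A(1)] A A' by simp
      have "cls (A ** matrix_inv (Ym r0 r1 r2 w)) = cls (A' ** matrix_inv (Ym r0 r1 r2 w'))"
        using e unfolding Phi_def pc pc' w w' A A'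
        by (simp add: Phi_cls Ym_invertible[OF nr] w w')
      then have "cls (Ym r0 r1 r2 w) = cls (Ym r0 r1 r2 w') \<and> cls A = cls A'"
        using key_inj[OF nr w(1) w'(1) A(1) A'(1) ev] by blast
      then show "p = p'" using pc pc' w w' A A' by simp
    qed
    have sub: "Phi ` (C \<times> S) \<subseteq> PGL3"
    proof
      fix x assume "x \<in> Phi ` (C \<times> S)"
      then obtain c g where cg: "c \<in> C" "g \<in> S" "x = Phi (c, g)" by auto
      obtain w where w: "w \<noteq> 0" "c = cls (Ym r0 r1 r2 w)" using cg unfolding C_def by auto
      obtain A where A: "invertible A" "g = cls A" using PGL3_rep cg SP by blast
      have "x = cls (A ** matrix_inv (Ym r0 r1 r2 w))"
        using cg w A unfolding Phi_def by (simp add: Phi_cls Ym_invertible[OF nr])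
      moreover have "invertible (A ** matrix_inv (Ym r0 r1 r2 w))"
        using A Ym_invertible[OF nr w(1)] by (simp add: invertible_mult minv_inv)
      ultimately show "x \<in> PGL3" using cls_in_PGL3 by simp
    qed
    have "card C * card S = card (C \<times> S)" by (simp add: card_cartesian_product)
    also have "\<dots> = card (Phi ` (C \<times> S))" using inj by (simp add: card_image)
    also have "\<dots> \<le> card (PGL3 :: ('a^3^3) set set)" using sub by (rule card_mono[OF finS])
    finally show ?thesis .
  qed
  have lower: "card (PGL3 :: ('a^3^3) set set) \<le> card C * card (Stab :: ('a^3^3) set set)"
  proof -
    have "PGL3 \<subseteq> Phi ` (C \<times> Stab)"
    proof
      fix h :: "('a^3^3) set" assume h: "h \<in> PGL3"
      obtain w G where wG: "w \<noteq> 0" "invertible G" "G *v e1 = e1"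
        "h = cls (G ** matrix_inv (Ym r0 r1 r2 w))" using surj_lemma[OF nr h] by blast
      have "pgl_act (cls G) (pt e1) = pt e1" unfolding act_fix using wG(3) by (intro exI[of _ 1]) simp
      then have "cls G \<in> Stab" unfolding Stab_def using cls_in_PGL3[OF wG(2)] by blast
      moreover have "cls (Ym r0 r1 r2 w) \<in> C" unfolding C_def using wG by blast
      moreover have "h = Phi (cls (Ym r0 r1 r2 w), cls G)"
        unfolding Phi_def using wG by (simp add: Phi_cls Ym_invertible[OF nr])
      ultimately show "h \<in> Phi ` (C \<times> Stab)" by blast
    qed
    then have "card (PGL3 :: ('a^3^3) set set) \<le> card (Phi ` (C \<times> Stab))" by (rule card_mono[OF finS])
    also have "\<dots> \<le> card (C \<times> (Stab :: ('a^3^3) set set))" using finS[of C] finS[of Stab] by (intro card_image_le) simp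
    also have "\<dots> = card C * card (Stab :: ('a^3^3) set set)" by (simp add: card_cartesian_product)
    finally show ?thesis .
  qed
  have le: "card S \<le> card (Stab :: ('a^3^3) set set)" if "independent_set (S :: ('a^3^3) set set)" for S
    using upper[OF that] lower cardC by (meson le_trans mult_le_cancel1 not_gr0)
  have "Max (card ` {S :: ('a ^ 3 ^ 3) set set. independent_set S}) = card (Stab :: ('a^3^3) set set)"
  proof (rule Max_eqI)
    show "finite (card ` {S :: ('a ^ 3 ^ 3) set set. independent_set S})"
      by (rule finite_imageI, rule finite_subset[OF subset_UNIV]) simp
    show "y \<le> card (Stab :: ('a^3^3) set set)" if "y \<in> card ` {S :: ('a ^ 3 ^ 3) set set. independent_set S}" for y
      using that le by auto
    show "card (Stab :: ('a^3^3) set set) \<in> card ` {S :: ('a ^ 3 ^ 3) set set. independent_set S}"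
      using Stab_indep by blast
  qed
  also have "\<dots> = q ^ 3 * (q ^ 2 - 1) * (q - 1)" unfolding card_Stab card_U q_def ..
  finally show ?thesis .
qed

end
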